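(* Let $s\in(0,1)$. Consider the eigenvalue problem for $v$ on $[0,\pi]$: $$\Big(\partial_\varphi^2+\frac{(1-2s)(1+2s)}{4}\frac{1}{\sin(\varphi)^2}-\frac{(1-2s)^2}{4}\Big)v=\lambda v \ \text{ in }[0,\pi],\qquad \lim_{\sin(\varphi)\to0}\sin(\varphi)^{1-2s}\partial_\varphi\big(\sin(\varphi)^{\frac{2s-1}{2}}v\big)=0 \ \text{ at } \varphi\in\{0,\pi\}.$$ Then the eigenvalues $\lambda$ of this problem (i.e. the values of $\lambda$ for which a nontrivial solution exists) are exactly $$\lambda_k=-\frac{(1-2s)^2}{4}-\Big(k-s+\frac12\Big)^2,\qquad k\in\mathbb{N}_{\ge0}.$$ *)

theory Defs
  imports "HOL-Analysis.Analysis"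
begin

definition angular_op :: "real \<Rightarrow> (real \<Rightarrow> real) \<Rightarrow> real \<Rightarrow> real" where
  "angular_op s v phi =
     deriv (deriv v) phi + (1 - 2 * s) * (1 + 2 * s) / 4 * (1 / (sin phi)\<^sup>2) * v phi
     - (1 - 2 * s)\<^sup>2 / 4 * v phi"

definition bdry_quantity :: "real \<Rightarrow> (real \<Rightarrow> real) \<Rightarrow> real \<Rightarrow> real" where
  "bdry_quantity s v phi =
     sin phi powr (1 - 2 * s) * deriv (\<lambda>x. sin x powr ((2 * s - 1) / 2) * v x) phi"

definition is_eigenvalue :: "real \<Rightarrow> real \<Rightarrow> bool" where
  "is_eigenvalue s lam \<longleftrightarrow>
     (\<exists>v :: real \<Rightarrow> real.
        (\<forall>phi\<in>{0<..<pi}. v differentiable (at phi) \<and> deriv v differentiable (at phi)) \<and>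
        (\<forall>phi\<in>{0<..<pi}. angular_op s v phi = lam * v phi) \<and>
        ((bdry_quantity s v \<longlongrightarrow> 0) (at_right 0)) \<and>
        ((bdry_quantity s v \<longlongrightarrow> 0) (at_left pi)) \<and>
        (\<exists>phi\<in>{0<..<pi}. v phi \<noteq> 0))"

end

theory Submission
  imports Defs "HOL-Analysis.Analysis" "HOL-Computational_Algebra.Polynomial"
begin


fun pc :: "real \<Rightarrow> nat \<Rightarrow> nat \<Rightarrow> real" where
  "pc a k 0 = (if even k then 1 else 0)"
| "pc a k (Suc 0) = (if even k then 0 else 1)"
| "pc a k (Suc (Suc m)) = (real m - real k) * (real m + real k + 2*a) / ((real m + 2)*(real m + 1)) * pc a k m"

lemma pc_parity: "odd (m + k) \<Longrightarrow> pc a k m = 0"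
  by (induction a k m rule: pc.induct) auto

lemma pc_big: "k < m \<Longrightarrow> pc a k m = 0"
proof (induction a k m rule: pc.induct)
  case (3 a k m)
  show ?case
  proof (cases "m = k")
    case True then show ?thesis by simp
  next
    case False
    show ?thesis
    proof (cases "k < m")
      case True then show ?thesis using 3 by simp
    next
      case False
      with \<open>m \<noteq> k\<close> 3(2) have "Suc m = k" by linarith
      then have "odd (m + k)" by auto
      then show ?thesis by (simp add: pc_parity)
    qed
  qed
qed auto

lemma pc_top_aux: "-1/2 < a \<Longrightarrow> m \<le> k \<Longrightarrow> even (k - m) \<Longrightarrow> pc a k m \<noteq> 0"
proof (induction a k m rule: pc.induct)
  case (1 a k)
  then show ?case by simp
next
  case (2 a k)
  then have "odd k" by (cases k) auto
  then show ?case by simp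
next
  case (3 a k m)
  have h: "m \<le> k" "even (k - m)" using 3(3,4) by (simp, simp add: Suc_diff_le)
  have "pc a k m \<noteq> 0" using 3(1)[OF 3(2) h] .
  moreover have "real m - real k \<noteq> 0" using 3(3) by simp
  moreover have "real m + real k + 2*a > 0" using 3(2,3) by simp
  ultimately show ?case by simp
qed

lemma pc_top: "-1/2 < a \<Longrightarrow> pc a k k \<noteq> 0"
  using pc_top_aux[of a k k] by simp

lemma pc_rec: "(real m + 2)*(real m + 1) * pc a k (Suc (Suc m)) = (real m - real k) * (real m + real k + 2*a) * pc a k m"
proof -
  have "(real m + 2)*(real m + 1) \<noteq> 0" by simp
  then show ?thesis unfolding pc.simps(3) by simp
qed

declare pc.simps(3)[simp del]

definition Pk :: "real \<Rightarrow> nat \<Rightarrow> real poly" where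
  "Pk a k = (\<Sum>i\<le>k. monom (pc a k i) i)"

lemma coeff_Pk: "coeff (Pk a k) j = pc a k j"
  by (auto simp: Pk_def coeff_sum coeff_monom pc_big)

lemma poly_Pk: "poly (Pk a k) y = (\<Sum>i\<le>k. pc a k i * y ^ i)"
  by (simp add: Pk_def poly_sum poly_monom)

lemma Pk_nz: "-1/2 < a \<Longrightarrow> Pk a k \<noteq> 0"
  using pc_top[of a k] coeff_Pk[of a k k] by auto

lemma Pk_ode: "(1 - y^2) * poly (pderiv (pderiv (Pk a k))) y - (2*a+1) * y * poly (pderiv (Pk a k)) y
   + real k * (real k + 2*a) * poly (Pk a k) y = 0"
proof -
  define P where "P = Pk a k"
  define Q where "Q = pderiv (pderiv P) - monom 1 2 * pderiv (pderiv P) - smult (2*a+1) (monom 1 1 * pderiv P)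
     + smult (real k * (real k + 2*a)) P"
  have cQ: "coeff Q m = (real m + 2)*(real m + 1) * pc a k (Suc (Suc m))
     - real m * (real m - 1) * pc a k m - (2*a+1) * real m * pc a k m + real k * (real k + 2*a) * pc a k m" for m
  proof (cases m)
    case 0 then show ?thesis by (simp add: Q_def P_def coeff_pderiv coeff_monom_mult coeff_Pk)
  next
    case (Suc j)
    then show ?thesis
    proof (cases j)
      case 0 then show ?thesis using Suc by (simp add: Q_def P_def coeff_pderiv coeff_monom_mult coeff_Pk)
    next
      case (Suc i)
      then show ?thesis using \<open>m = Suc j\<close>
        by (simp add: Q_def P_def coeff_pderiv coeff_monom_mult coeff_Pk numeral_2_eq_2 of_nat_Suc algebra_simps)
    qed
  qed
  have "coeff Q m = 0" for m
    unfolding cQ pc_rec by (simp add: algebra_simps)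
  then have "Q = 0" by (simp add: poly_eq_iff)
  then have "poly Q y = 0" by simp
  then show ?thesis by (simp add: Q_def P_def poly_monom algebra_simps power2_eq_square)
qed



lemma dT: assumes "0 < sin x"
  shows "((\<lambda>x. sin x powr a) has_real_derivative (sin x powr a * (a * cos x / sin x))) (at x)"
proof -
  have "((\<lambda>x. sin x powr a) has_real_derivative a * sin x powr (a - real 1) * cos x) (at x)"
    by (rule DERIV_fun_powr[OF DERIV_sin assms])
  moreover have "a * sin x powr (a - real 1) * cos x = sin x powr a * (a * cos x / sin x)"
    using assms by (simp add: powr_diff)
  ultimately show ?thesis by simp
qed

lemma dpc: "((\<lambda>x. poly p (cos x)) has_real_derivative - sin x * poly (pderiv p) (cos x)) (at x)"
  using DERIV_chain2[OF poly_DERIV DERIV_cos, of p x] by (simp add: mult.commute)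

definition V :: "real \<Rightarrow> nat \<Rightarrow> real \<Rightarrow> real" where
  "V a k x = sin x powr a * poly (Pk a k) (cos x)"
definition V1 :: "real \<Rightarrow> nat \<Rightarrow> real \<Rightarrow> real" where
  "V1 a k x = sin x powr a * (a * cos x / sin x * poly (Pk a k) (cos x) - sin x * poly (pderiv (Pk a k)) (cos x))"
definition V2 :: "real \<Rightarrow> nat \<Rightarrow> real \<Rightarrow> real" where
  "V2 a k x = sin x powr a * ((a^2 * (cos x)^2 - a) / (sin x)^2 * poly (Pk a k) (cos x)
     - (2*a+1) * cos x * poly (pderiv (Pk a k)) (cos x) + (sin x)^2 * poly (pderiv (pderiv (Pk a k))) (cos x))"

lemma dV: assumes "0 < sin x" shows "(V a k has_real_derivative V1 a k x) (at x)"
proof -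
  show ?thesis using DERIV_mult[OF dT[OF assms] dpc, of a "Pk a k"] unfolding V_def[abs_def] V1_def
    by (rule DERIV_cong) (simp add: algebra_simps)
qed

lemma dV1: assumes "0 < sin x" shows "(V1 a k has_real_derivative V2 a k x) (at x)"
proof -
  let ?P = "Pk a k"
  have dq: "((\<lambda>x. a * cos x / sin x) has_real_derivative - a / (sin x)^2) (at x)"
  proof -
    have d: "((\<lambda>x. a * cos x / sin x) has_real_derivative (a * - sin x * sin x - a * cos x * cos x) / (sin x * sin x)) (at x)"
      using assms by (auto intro!: derivative_eq_intros)
    have h: "a * (sin x * sin x) + a * (cos x * cos x) = a"
      using sin_cos_squared_add[of x] by (metis distrib_left mult.right_neutral power2_eq_square)
    moreover have "a * - sin x * sin x - a * cos x * cos x = - (a * (sin x * sin x) + a * (cos x * cos x))"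
      by (simp add: algebra_simps)
    ultimately have eq: "a * - sin x * sin x - a * cos x * cos x = - a" by simp
    have "((\<lambda>x. a * cos x / sin x) has_real_derivative (- a) / (sin x * sin x)) (at x)" using d unfolding eq .
    then show ?thesis by (simp add: power2_eq_square)
  qed
  have dR: "((\<lambda>x. a * cos x / sin x * poly ?P (cos x) - sin x * poly (pderiv ?P) (cos x)) has_real_derivative
     (- a / (sin x)^2 * poly ?P (cos x) + a * cos x / sin x * (- sin x * poly (pderiv ?P) (cos x)))
     - (cos x * poly (pderiv ?P) (cos x) + sin x * (- sin x * poly (pderiv (pderiv ?P)) (cos x)))) (at x)"
    using DERIV_diff[OF DERIV_mult[OF dq dpc[of "Pk a k" x]] DERIV_mult[OF DERIV_sin dpc[of "pderiv (Pk a k)" x]]]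
    by (rule DERIV_cong) (simp add: algebra_simps)
  show ?thesis using DERIV_mult[OF dT[OF assms] dR] unfolding V2_def V1_def[abs_def]
    by (rule DERIV_cong) (use assms in \<open>simp add: field_simps power2_eq_square\<close>)
qed

definition lamk :: "real \<Rightarrow> nat \<Rightarrow> real" where
  "lamk a k = -(a^2) - (real k + a)^2"

lemma alg_ode:
  fixes T P P1 P2 A Sq C K a :: real
  assumes "Sq \<noteq> 0" "A + a*(1-a) = -(a^2)*Sq" "Sq*P2 - (2*a+1)*C*P1 = -K*P"
  shows "T*(A/Sq*P - (2*a+1)*C*P1 + Sq*P2) + a*(1-a)*(1/Sq)*(T*P) - a^2*(T*P) = (-(a^2) - a^2 - K) * (T*P)"
proof -
  have "T*(A/Sq*P) + a*(1-a)*(1/Sq)*(T*P) = T*P*((A + a*(1-a))/Sq)"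
    using assms(1) by (simp add: field_simps)
  also have "\<dots> = T*P*(-(a^2))" using assms(1,2) by simp
  finally have 1: "T*(A/Sq*P) + a*(1-a)*(1/Sq)*(T*P) = T*P*(-(a^2))" .
  have "T*(A/Sq*P - (2*a+1)*C*P1 + Sq*P2) + a*(1-a)*(1/Sq)*(T*P) - a^2*(T*P)
     = (T*(A/Sq*P) + a*(1-a)*(1/Sq)*(T*P)) + T*(Sq*P2 - (2*a+1)*C*P1) - a^2*(T*P)"
    by (simp add: algebra_simps)
  also have "\<dots> = T*P*(-(a^2)) + T*(-K*P) - a^2*(T*P)" using 1 assms(3) by simp
  finally show ?thesis by (simp add: algebra_simps)
qed

lemma V_ode: assumes "0 < sin x"
  shows "V2 a k x + a * (1 - a) * (1 / (sin x)^2) * V a k x - a^2 * V a k x = lamk a k * V a k x"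
proof -
  have o: "(1 - (cos x)^2) * poly (pderiv (pderiv (Pk a k))) (cos x) - (2*a+1) * cos x * poly (pderiv (Pk a k)) (cos x)
   + real k * (real k + 2*a) * poly (Pk a k) (cos x) = 0" by (rule Pk_ode)
  have s: "(sin x)^2 = 1 - (cos x)^2" by (simp add: sin_squared_eq)
  have o': "(sin x)^2 * poly (pderiv (pderiv (Pk a k))) (cos x) - (2*a+1) * cos x * poly (pderiv (Pk a k)) (cos x)
     = - (real k * (real k + 2*a)) * poly (Pk a k) (cos x)" using o unfolding s by simp
  have "(sin x)^2 > 0" using assms by simp
  have num: "(a^2 * (cos x)^2 - a) + a*(1-a) = -(a^2) * (sin x)^2" by (simp add: s algebra_simps power2_eq_square[of a])
  have l: "lamk a k = -(a^2) - a^2 - real k * (real k + 2*a)" by (simp add: lamk_def power2_eq_square algebra_simps)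
  show ?thesis unfolding V2_def V_def l
    by (rule alg_ode) (use \<open>(sin x)^2 > 0\<close> num o' in auto)
qed



lemma sin_pos_oi: "x \<in> {0<..<pi} \<Longrightarrow> 0 < sin x"
  by (simp add: sin_gt_zero)

lemma deriv_V: "x \<in> {0<..<pi} \<Longrightarrow> deriv (V a k) x = V1 a k x"
  by (rule DERIV_imp_deriv[OF dV[OF sin_pos_oi]])

lemma dderiv_V: assumes "x \<in> {0<..<pi}" shows "(deriv (V a k) has_real_derivative V2 a k x) (at x)"
  by (rule has_field_derivative_transform_within_open[OF dV1[OF sin_pos_oi[OF assms]] open_greaterThanLessThan assms])
     (simp add: deriv_V)

lemma sin_to0_right: "((\<lambda>x::real. sin x) \<longlongrightarrow> 0) (at_right 0)"
proof -
  have "((\<lambda>x::real. sin x) \<longlongrightarrow> sin 0) (at 0 within {0<..})"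
    by (rule tendsto_sin[OF tendsto_ident_at])
  then show ?thesis by simp
qed

lemma sin_to0_left: "((\<lambda>x. sin x) \<longlongrightarrow> 0) (at_left pi)"
proof -
  have "((\<lambda>x. sin x) \<longlongrightarrow> sin pi) (at_left pi)"
    by (intro tendsto_intros)
  then show ?thesis by simp
qed

lemma ev_right: "\<forall>\<^sub>F x in at_right 0. x \<in> {0<..<pi}"
  using eventually_at_right_real[of 0 pi] by simp
lemma ev_left: "\<forall>\<^sub>F x in at_left pi. x \<in> {0<..<pi}"
  using eventually_at_left_real[of 0 pi] by simp

lemma sinpow_lim:
  assumes "0 < c" "F = at_right 0 \<or> F = at_left pi"
  shows "((\<lambda>x. sin x powr c) \<longlongrightarrow> 0) F"
proof -
  have s: "((\<lambda>x. sin x) \<longlongrightarrow> 0) F" using assms(2) sin_to0_right sin_to0_left by auto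
  have e: "\<forall>\<^sub>F x in F. 0 \<le> sin x"
    using assms(2) ev_right ev_left by (auto elim!: eventually_mono simp: sin_ge_zero)
  show ?thesis by (rule tendsto_zero_powrI[OF s tendsto_const e assms(1)])
qed

lemma cospoly_lim: "F = at_right 0 \<or> F = at_left pi \<Longrightarrow> \<exists>L. ((\<lambda>x. poly p (cos x)) \<longlongrightarrow> L) F"
proof (elim disjE)
  assume "F = at_right 0"
  then show ?thesis using tendsto_poly[OF tendsto_cos[OF tendsto_ident_at[of 0 "{0<..}"]], of p] by blast
next
  assume "F = at_left pi"
  then show ?thesis using tendsto_poly[OF tendsto_cos[OF tendsto_ident_at[of pi "{..<pi}"]], of p] by blast
qed

lemma poly_cos_nz: assumes "p \<noteq> 0" shows "\<exists>x\<in>{0<..<pi}. poly p (cos x) \<noteq> 0"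
proof (rule ccontr)
  assume "\<not> ?thesis"
  then have h: "\<forall>x\<in>{0<..<pi}. poly p (cos x) = 0" by auto
  have "{-1<..<(1::real)} \<subseteq> {x. poly p x = 0}"
  proof
    fix y :: real assume "y \<in> {-1<..<1}"
    then have "arccos y \<in> {0<..<pi}" "cos (arccos y) = y" using arccos_lt_bounded[of y] by auto
    then show "y \<in> {x. poly p x = 0}" using h by force
  qed
  then have "finite {-1<..<(1::real)}" using poly_roots_finite[OF assms] finite_subset by blast
  then show False using infinite_Ioo[of "-1::real" 1] by simp
qed

lemma fwd:
  assumes "0 < s" "s < 1" "a = (1 - 2 * s) / 2"
  shows "is_eigenvalue s (lamk a k)"
  unfolding is_eigenvalue_def
proof (intro exI[of _ "V a k"] conjI ballI)
  fix phi :: real assume ph: "phi \<in> {0<..<pi}"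
  show "V a k differentiable at phi"
    using dV[OF sin_pos_oi[OF ph]] real_differentiable_def by blast
  show "deriv (V a k) differentiable at phi"
    using dderiv_V[OF ph] real_differentiable_def by blast
  have dd: "deriv (deriv (V a k)) phi = V2 a k phi" by (rule DERIV_imp_deriv[OF dderiv_V[OF ph]])
  have c1: "(1 - 2 * s) * (1 + 2 * s) / 4 = a * (1 - a)" unfolding assms(3) by (simp add: field_simps)
  have c2: "(1 - 2 * s)\<^sup>2 / 4 = a^2" unfolding assms(3) by (simp add: power2_eq_square field_simps)
  show "angular_op s (V a k) phi = lamk a k * V a k phi"
    unfolding angular_op_def dd c1 c2 using V_ode[OF sin_pos_oi[OF ph]] by simp
next
  have eqf: "sin x powr ((2 * s - 1) / 2) * V a k x = poly (Pk a k) (cos x)" if "x \<in> {0<..<pi}" for x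
  proof -
    have "sin x powr ((2 * s - 1) / 2) * sin x powr a = sin x powr 0"
      unfolding powr_add[symmetric] using assms(3) by (simp add: field_simps)
    then show ?thesis using sin_pos_oi[OF that] by (simp add: V_def)
  qed
  have bq: "bdry_quantity s (V a k) x = - (sin x powr (2*a+1) * poly (pderiv (Pk a k)) (cos x))"
    if x: "x \<in> {0<..<pi}" for x
  proof -
    have "((\<lambda>x. sin x powr ((2 * s - 1) / 2) * V a k x) has_real_derivative - sin x * poly (pderiv (Pk a k)) (cos x)) (at x)"
      by (rule has_field_derivative_transform_within_open[OF dpc open_greaterThanLessThan x]) (simp add: eqf)
    then have "deriv (\<lambda>x. sin x powr ((2 * s - 1) / 2) * V a k x) x = - sin x * poly (pderiv (Pk a k)) (cos x)"
      by (rule DERIV_imp_deriv)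
    moreover have "sin x powr (2*a+1) = sin x powr (1 - 2 * s) * sin x"
    proof -
      have e2: "2*a+1 = (1 - 2 * s) + 1" using assms(3) by simp
      show ?thesis unfolding e2 powr_add using sin_pos_oi[OF x] by simp
    qed
    ultimately show ?thesis unfolding bdry_quantity_def by simp
  qed
  have lim: "((\<lambda>x. - (sin x powr (2*a+1) * poly (pderiv (Pk a k)) (cos x))) \<longlongrightarrow> 0) F"
    if F: "F = at_right 0 \<or> F = at_left pi" for F
  proof -
    obtain L where L: "((\<lambda>x. poly (pderiv (Pk a k)) (cos x)) \<longlongrightarrow> L) F" using cospoly_lim[OF F] by blast
    have "2*a+1 > 0" using assms by simp
    from tendsto_minus[OF tendsto_mult[OF sinpow_lim[OF this F] L]] show ?thesis by simp
  qed
  show "(bdry_quantity s (V a k) \<longlongrightarrow> 0) (at_right 0)"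
    using lim[of "at_right 0"] ev_right
    by (auto intro: Lim_transform_eventually elim!: eventually_mono simp: bq)
  show "(bdry_quantity s (V a k) \<longlongrightarrow> 0) (at_left pi)"
    using lim[of "at_left pi"] ev_left
    by (auto intro: Lim_transform_eventually elim!: eventually_mono simp: bq)
next
  have "a > -1/2" using assms by simp
  from poly_cos_nz[OF Pk_nz[OF this]] obtain x where "x \<in> {0<..<pi}" "poly (Pk a k) (cos x) \<noteq> 0" by blast
  moreover then have "sin x > 0" using sin_pos_oi by blast
  moreover then have "sin x powr a > 0" by simp
  ultimately show "\<exists>phi\<in>{0<..<pi}. V a k phi \<noteq> 0" unfolding V_def by force
qed



lemma sinpow_le: assumes "0 < x" "x \<le> z" "z \<le> pi/2"
  shows "sin z powr c \<le> sin x powr c + 1"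
proof -
  have sx: "0 < sin x" using assms by (intro sin_gt_zero) auto
  have sxz: "sin x \<le> sin z" using assms by (subst sin_mono_le_eq) auto
  show ?thesis
  proof (cases "c \<le> 0")
    case True
    then have "sin z powr c \<le> sin x powr c" by (rule powr_mono2'[OF _ sx sxz])
    then show ?thesis by simp
  next
    case False
    then have "sin z powr c \<le> 1 powr c" using sx sxz by (intro powr_mono2) auto
    then have "sin z powr c \<le> 1" by simp
    moreover have "0 \<le> sin x powr c" by simp
    ultimately show ?thesis by linarith
  qed
qed

lemma mvt_bound:
  assumes b: "0 < b" "b \<le> pi/2"
    and d: "\<And>x. x \<in> {0<..b} \<Longrightarrow> (w has_real_derivative w' x) (at x)"
    and wb: "\<And>x. x \<in> {0<..b} \<Longrightarrow> \<bar>w' x\<bar> \<le> sin x powr c"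
    and x: "x \<in> {0<..b}"
  shows "\<bar>w x\<bar> \<le> \<bar>w b\<bar> + pi * (sin x powr c + 1)"
proof (cases "x = b")
  case True
  have "0 \<le> pi * (sin x powr c + 1)" by (simp add: add_nonneg_nonneg)
  then show ?thesis using True by simp
next
  case False
  then have xb: "x < b" "0 < x" using x by auto
  obtain z where z: "x < z" "z < b" "w b - w x = (b - x) * w' z"
    using MVT2[OF xb(1), of w w'] d xb by force
  have "\<bar>w' z\<bar> \<le> sin z powr c" using wb z xb by auto
  also have "\<dots> \<le> sin x powr c + 1" using z xb b by (intro sinpow_le) auto
  finally have wz: "\<bar>w' z\<bar> \<le> sin x powr c + 1" .
  have e: "w x = w b - (b - x) * w' z" using z(3) by linarith
  have e2: "\<bar>(b - x) * w' z\<bar> = (b - x) * \<bar>w' z\<bar>" using xb by (simp add: abs_mult)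
  have "\<bar>w x\<bar> \<le> \<bar>w b\<bar> + (b - x) * \<bar>w' z\<bar>"
    using abs_triangle_ineq4[of "w b" "(b - x) * w' z"] e e2 by simp
  also have "(b - x) * \<bar>w' z\<bar> \<le> pi * (sin x powr c + 1)"
    using wz xb b by (intro mult_mono) (auto simp: pi_gt_zero less_imp_le)
  finally show ?thesis by simp
qed

lemma mvt_bound_pi:
  assumes b: "0 < b" "b \<le> pi/2"
    and d: "\<And>x. x \<in> {pi-b..<pi} \<Longrightarrow> (w has_real_derivative w' x) (at x)"
    and wb: "\<And>x. x \<in> {pi-b..<pi} \<Longrightarrow> \<bar>w' x\<bar> \<le> sin x powr c"
    and x: "x \<in> {pi-b..<pi}"
  shows "\<bar>w x\<bar> \<le> \<bar>w (pi - b)\<bar> + pi * (sin x powr c + 1)"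
proof -
  have d': "((\<lambda>y. w (pi - y)) has_real_derivative - w' (pi - y)) (at y)" if "y \<in> {0<..b}" for y
  proof -
    have "(w has_real_derivative w' (pi - y)) (at (pi - y))" using d that by auto
    moreover have h2: "((\<lambda>y. pi - y) has_real_derivative -1) (at y)" by (auto intro!: derivative_eq_intros)
    ultimately have "((\<lambda>y. w (pi - y)) has_real_derivative w' (pi - y) * -1) (at y)"
      by (intro DERIV_chain2[where f=w and g="\<lambda>y. pi - y"]) auto
    then show ?thesis by simp
  qed
  have wb': "\<bar>- w' (pi - y)\<bar> \<le> sin y powr c" if "y \<in> {0<..b}" for y
    using wb[of "pi - y"] that by auto
  have "\<bar>w (pi - (pi - x))\<bar> \<le> \<bar>w (pi - b)\<bar> + pi * (sin (pi - x) powr c + 1)"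
    by (rule mvt_bound[OF b d' wb', of "pi - x"]) (use x in auto)
  then show ?thesis by simp
qed



lemma density_contra:
  fixes h :: "real \<Rightarrow> real"
  assumes cont: "continuous_on {0<..<pi} h" and bnd: "\<forall>x\<in>{0<..<pi}. \<bar>h x\<bar> \<le> M"
    and x0: "x0 \<in> {0<..<pi}" "h x0 \<noteq> 0"
    and lim: "\<And>g. real_polynomial_function g \<Longrightarrow>
        ((\<lambda>e. integral {e..pi-e} (\<lambda>x. h x * g (cos x))) \<longlongrightarrow> 0) (at_right 0)"
  shows False
proof -
  define \<sigma> where "\<sigma> = sgn (h x0)"
  define H0 where "H0 = \<bar>h x0\<bar>"
  have H0: "H0 > 0" using x0 by (simp add: H0_def)
  have \<sigma>1: "\<sigma> * h x0 = H0" by (simp add: \<sigma>_def H0_def sgn_mult_abs abs_sgn mult.commute)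
  have \<sigma>2: "\<bar>\<sigma>\<bar> = 1" using x0 by (simp add: \<sigma>_def abs_sgn_eq)
  have \<sigma>3: "\<sigma> * \<sigma> = 1" using \<sigma>2 by (metis abs_mult_self_eq mult_1)
  have M: "M \<ge> H0" using bnd x0 by (simp add: H0_def)
  obtain d where d: "d > 0" "\<forall>x\<in>{0<..<pi}. dist x x0 < d \<longrightarrow> dist (h x) (h x0) < H0/2"
    using cont x0(1) H0 unfolding continuous_on_iff by (meson half_gt_zero)
  define \<delta> where "\<delta> = min d (min x0 (pi - x0)) / 2"
  have "\<delta> \<le> (pi - x0)/2" "\<delta> \<le> x0/2" "\<delta> \<le> d/2" "\<delta> > 0" using d x0(1) by (auto simp: \<delta>_def)
  then have \<delta>: "\<delta> > 0" "\<delta> < d" "x0 - \<delta> > 0" "x0 + \<delta> < pi" using d x0(1) by auto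
  have pos: "\<sigma> * h x > H0/2" if "\<bar>x - x0\<bar> \<le> \<delta>" for x
  proof -
    have "x \<in> {0<..<pi}" "dist x x0 < d" using that \<delta> by (auto simp: dist_real_def)
    then have "\<bar>h x - h x0\<bar> < H0/2" using d by (auto simp: dist_real_def)
    moreover have "\<sigma> * h x = \<sigma> * h x0 + \<sigma> * (h x - h x0)" by (simp add: algebra_simps)
    moreover have "\<bar>\<sigma> * (h x - h x0)\<bar> = \<bar>h x - h x0\<bar>" using \<sigma>2 by (simp add: abs_mult)
    ultimately show ?thesis using \<sigma>1 by linarith
  qed
  define f where "f x = \<sigma> * max 0 (\<delta> - \<bar>x - x0\<bar>)" for x
  have fcont: "continuous_on UNIV f" unfolding f_def by (intro continuous_intros)
  define \<eta> where "\<eta> = H0 * \<delta>^2 / (8 * (M * pi + 1))"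
  have Mpos: "M * pi + 1 > 0" using M H0 by (simp add: add_pos_nonneg)
  have \<eta>: "\<eta> > 0" using H0 \<delta> Mpos by (simp add: \<eta>_def)
  have c1: "continuous_on {-1..1} (\<lambda>y. f (arccos y))"
    by (rule continuous_on_compose2[OF fcont continuous_on_arccos']) auto
  obtain g where g: "real_polynomial_function g" "\<And>y. y \<in> {-1..1} \<Longrightarrow> \<bar>f (arccos y) - g y\<bar> < \<eta>"
    using Stone_Weierstrass_real_polynomial_function[OF compact_Icc c1 \<eta>] by blast
  have gf: "\<bar>g (cos x) - f x\<bar> < \<eta>" if "x \<in> {0..pi}" for x
    using g(2)[of "cos x"] that arccos_cos[of x] by auto
  have gc: "continuous_on UNIV g" using continuous_real_polymonial_function[OF g(1)]
    by (simp add: continuous_at_imp_continuous_on)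
  define I where "I e = integral {e..pi-e} (\<lambda>x. h x * g (cos x))" for e
  have "\<forall>\<^sub>F e in at_right 0. dist (I e) 0 < H0 * \<delta>^2 / 8"
  proof -
    have "H0 * \<delta>^2 / 8 > 0" using H0 \<delta> by simp
    then show ?thesis using lim[OF g(1)] unfolding tendsto_iff I_def by blast
  qed
  moreover have "\<forall>\<^sub>F e in at_right 0. e \<in> {0<..<min (x0 - \<delta>) (pi - x0 - \<delta>)}"
    by (rule eventually_at_right_real) (use \<delta> in auto)
  ultimately have "\<forall>\<^sub>F e in at_right 0. dist (I e) 0 < H0 * \<delta>^2 / 8 \<and> e \<in> {0<..<min (x0 - \<delta>) (pi - x0 - \<delta>)}"
    by (rule eventually_conj)
  then obtain e where "dist (I e) 0 < H0 * \<delta>^2 / 8 \<and> e \<in> {0<..<min (x0 - \<delta>) (pi - x0 - \<delta>)}"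
    using eventually_happens'[OF trivial_limit_at_right_real] by blast
  then have e: "\<bar>I e\<bar> < H0 * \<delta>^2 / 8" "0 < e" "e < x0 - \<delta>" "e < pi - x0 - \<delta>"
    by (auto simp: dist_real_def)
  have sub: "{e..pi-e} \<subseteq> {0<..<pi}" using e by auto
  have hc: "continuous_on {e..pi-e} h" using continuous_on_subset[OF cont sub] .
  have gcc: "continuous_on {e..pi-e} (\<lambda>x. g (cos x))"
    by (rule continuous_on_compose2[OF gc]) (auto intro: continuous_intros)
  have fcc: "continuous_on {e..pi-e} f" using continuous_on_subset[OF fcont] by blast
  have i1: "(\<lambda>x. h x * f x) integrable_on {e..pi-e}"
    by (rule integrable_continuous_interval) (intro continuous_intros hc fcc)
  have i2: "(\<lambda>x. h x * (g (cos x) - f x)) integrable_on {e..pi-e}"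
    by (rule integrable_continuous_interval) (intro continuous_intros hc fcc gcc)
  define A where "A = integral {e..pi-e} (\<lambda>x. h x * f x)"
  define R where "R = integral {e..pi-e} (\<lambda>x. h x * (g (cos x) - f x))"
  have IAR: "I e = A + R"
  proof -
    have "I e = integral {e..pi-e} (\<lambda>x. h x * f x + h x * (g (cos x) - f x))"
      unfolding I_def by (simp add: algebra_simps)
    then show ?thesis unfolding A_def R_def using integral_add[OF i1 i2] by simp
  qed
  have Rb: "\<bar>R\<bar> \<le> M * \<eta> * pi"
  proof -
    have "norm R \<le> (M * \<eta>) * Henstock_Kurzweil_Integration.content {e..pi-e}"
    proof (rule has_integral_bound_real[of _ "{}"])
      show "0 \<le> M * \<eta>" using M H0 \<eta> by simp
      show "((\<lambda>x. h x * (g (cos x) - f x)) has_integral R) {e..pi-e}"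
        unfolding R_def using i2 by (simp add: has_integral_integral)
      fix x assume x: "x \<in> {e..pi-e} - {}"
      then have "x \<in> {0<..<pi}" "x \<in> {0..pi}" using sub by auto
      then have "\<bar>h x\<bar> \<le> M" "\<bar>g (cos x) - f x\<bar> \<le> \<eta>" using bnd gf[of x] by auto
      then show "norm (h x * (g (cos x) - f x)) \<le> M * \<eta>"
        by (simp add: abs_mult mult_mono')
    qed auto
    moreover have "Henstock_Kurzweil_Integration.content {e..pi-e} \<le> pi" using e by (simp add: content_real_if)
    ultimately show ?thesis using M H0 \<eta>
      by (smt (verit, best) mult_left_mono real_norm_def zero_le_mult_iff)
  qed
  have Ab: "A \<ge> H0 * \<delta>^2 / 4"
  proof -
    have ssub: "{x0 - \<delta>/2..x0 + \<delta>/2} \<subseteq> {e..pi-e}" using e \<delta> by auto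
    have nn: "\<forall>x\<in>{e..pi-e}. 0 \<le> h x * f x"
    proof
      fix x assume "x \<in> {e..pi-e}"
      show "0 \<le> h x * f x"
      proof (cases "\<bar>x - x0\<bar> \<le> \<delta>")
        case True
        have E: "h x * f x = (\<sigma> * h x) * max 0 (\<delta> - \<bar>x - x0\<bar>)"
          by (simp add: f_def mult_ac)
        have "\<sigma> * h x > 0" using pos[OF True] H0 by simp
        then show ?thesis unfolding E by (metis less_imp_le max.cobounded1 mult_nonneg_nonneg)
      next
        case False then show ?thesis by (simp add: f_def)
      qed
    qed
    have i3: "(\<lambda>x. h x * f x) integrable_on {x0 - \<delta>/2..x0 + \<delta>/2}"
      by (rule integrable_on_subinterval[OF i1 ssub])
    have "integral {x0 - \<delta>/2..x0 + \<delta>/2} (\<lambda>x. H0 / 2 * (\<delta> / 2)) \<le> integral {x0 - \<delta>/2..x0 + \<delta>/2} (\<lambda>x. h x * f x)"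
    proof (rule integral_le[OF integrable_const_ivl i3])
      fix x assume x: "x \<in> {x0 - \<delta>/2..x0 + \<delta>/2}"
      then have xd: "\<bar>x - x0\<bar> \<le> \<delta>/2" by (auto split: abs_split)
      have "h x * f x = (\<sigma> * h x) * max 0 (\<delta> - \<bar>x - x0\<bar>)"
        by (simp add: f_def mult_ac)
      moreover have "max 0 (\<delta> - \<bar>x - x0\<bar>) = \<delta> - \<bar>x - x0\<bar>" using xd \<delta> by simp
      ultimately have E2: "h x * f x = (\<sigma> * h x) * (\<delta> - \<bar>x - x0\<bar>)" by simp
      have a1: "\<sigma> * h x \<ge> H0/2" using pos[of x] xd \<delta> by simp
      have a2: "\<delta> - \<bar>x - x0\<bar> \<ge> \<delta>/2" using xd by simp
      show "H0 / 2 * (\<delta> / 2) \<le> h x * f x"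
        unfolding E2 using a1 a2 H0 \<delta> by (intro mult_mono) auto
    qed
    also have "\<dots> \<le> A" unfolding A_def by (rule integral_subset_le[OF ssub i3 i1 nn])
    finally show ?thesis using \<delta> by (simp add: content_real power2_eq_square field_simps)
  qed
  have "M * \<eta> * pi \<le> H0 * \<delta>^2 / 8"
  proof -
    have "M * \<eta> * pi = H0 * \<delta>^2 / 8 * (M * pi / (M * pi + 1))" by (simp add: \<eta>_def field_simps)
    also have "\<dots> \<le> H0 * \<delta>^2 / 8 * 1"
      using Mpos H0 \<delta> M by (intro mult_left_mono) auto
    finally show ?thesis by simp
  qed
  then have "\<bar>I e\<bar> \<ge> H0 * \<delta>^2 / 8" using IAR Ab Rb by linarith
  then show False using e(1) by simp
qed



context
  fixes s a lam :: real and v :: "real \<Rightarrow> real"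
  assumes s0: "0 < s" and s1: "s < 1" and adef: "a = (1 - 2 * s) / 2"
    and dv: "\<forall>\<phi>\<in>{0<..<pi}. v differentiable (at \<phi>) \<and> deriv v differentiable (at \<phi>)"
    and ode: "\<forall>\<phi>\<in>{0<..<pi}. angular_op s v \<phi> = lam * v \<phi>"
    and bc0: "(bdry_quantity s v \<longlongrightarrow> 0) (at_right 0)"
    and bcpi: "(bdry_quantity s v \<longlongrightarrow> 0) (at_left pi)"
begin

lemma a_rng: "-1/2 < a" "a < 1/2" using s0 s1 adef by auto

lemma Dv: "x \<in> {0<..<pi} \<Longrightarrow> (v has_real_derivative deriv v x) (at x)"
  using dv DERIV_deriv_iff_real_differentiable by blast

lemma Ddv: "x \<in> {0<..<pi} \<Longrightarrow> (deriv v has_real_derivative deriv (deriv v) x) (at x)"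
  using dv DERIV_deriv_iff_real_differentiable by blast

lemma vcont: "continuous_on {0<..<pi} v"
  by (rule continuous_at_imp_continuous_on) (use Dv DERIV_isCont in blast)

lemma ode': "x \<in> {0<..<pi} \<Longrightarrow> deriv (deriv v) x = lam * v x - a*(1-a)*(1/(sin x)^2) * v x + a^2 * v x"
proof -
  assume x: "x \<in> {0<..<pi}"
  have c1: "(1 - 2 * s) * (1 + 2 * s) / 4 = a * (1 - a)" unfolding adef by (simp add: field_simps)
  have c2: "(1 - 2 * s)\<^sup>2 / 4 = a^2" unfolding adef by (simp add: power2_eq_square field_simps)
  from ode x have "angular_op s v x = lam * v x" by blast
  then show ?thesis unfolding angular_op_def c1 c2 by simp
qed

lemma Tcont: "x \<in> {0<..<pi} \<Longrightarrow> isCont (\<lambda>x. sin x powr c) x"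
  using DERIV_isCont[OF dT[OF sin_pos_oi]] by blast

lemma alg_q: fixes T Ti X V D :: real assumes "T * Ti = 1"
  shows "(T*T)*(Ti*X*V + Ti*D) = T*D + T*X*V"
proof -
  have "(T*T)*(Ti*X*V + Ti*D) = (T*Ti)*(T*X*V + T*D)" by (simp add: algebra_simps)
  then show ?thesis using assms by simp
qed

lemma qf: assumes x: "x \<in> {0<..<pi}"
  shows "bdry_quantity s v x = sin x powr a * deriv v x - a * sin x powr a * (cos x / sin x) * v x"
proof -
  have e: "(2 * s - 1) / 2 = - a" using adef by simp
  have sx: "sin x > 0" using sin_pos_oi[OF x] .
  have "((\<lambda>x. sin x powr (- a) * v x) has_real_derivative
        sin x powr (-a) * (-a * cos x / sin x) * v x + sin x powr (-a) * deriv v x) (at x)"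
    using DERIV_mult[OF dT[OF sx, of "-a"] Dv[OF x]] by (rule DERIV_cong) (simp add: algebra_simps)
  then have d: "deriv (\<lambda>x. sin x powr ((2 * s - 1) / 2) * v x) x = sin x powr (-a) * (-a * cos x / sin x) * v x + sin x powr (-a) * deriv v x"
    unfolding e by (rule DERIV_imp_deriv)
  have p: "sin x powr (1 - 2 * s) = sin x powr a * sin x powr a"
  proof -
    have e1: "1 - 2 * s = a + a" using adef by simp
    show ?thesis unfolding e1 by (rule powr_add)
  qed
  have t: "sin x powr a * sin x powr (-a) = 1"
    unfolding powr_add[symmetric] using sx by simp
  show ?thesis unfolding bdry_quantity_def d p alg_q[OF t] by (simp add: algebra_simps)
qed

lemma dw: assumes x: "x \<in> {0<..<pi}"
  shows "((\<lambda>x. sin x powr (-a) * v x) has_real_derivative bdry_quantity s v x * sin x powr (-2*a)) (at x)"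
proof -
  have sx: "sin x > 0" using sin_pos_oi[OF x] .
  have t: "sin x powr a * sin x powr (-2*a) = sin x powr (-a)"
    unfolding powr_add[symmetric] by simp
  have d: "((\<lambda>x. sin x powr (- a) * v x) has_real_derivative
        sin x powr (-a) * (-a * cos x / sin x) * v x + sin x powr (-a) * deriv v x) (at x)"
    using DERIV_mult[OF dT[OF sx, of "-a"] Dv[OF x]] by (rule DERIV_cong) (simp add: algebra_simps)
  have "bdry_quantity s v x * sin x powr (-2*a) = (sin x powr a * sin x powr (-2*a)) * (deriv v x - a * (cos x / sin x) * v x)"
    unfolding qf[OF x] by (simp add: algebra_simps)
  also have "\<dots> = sin x powr (-a) * (-a * cos x / sin x) * v x + sin x powr (-a) * deriv v x"
    unfolding t by (simp add: algebra_simps)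
  finally show ?thesis using d by simp
qed

lemma ends_bound: "\<exists>b C0. 0 < b \<and> b \<le> pi/2 \<and> 0 \<le> C0 \<and>
   (\<forall>x \<in> {0<..b} \<union> {pi-b..<pi}. \<bar>sin x powr (-a) * v x\<bar> \<le> C0 + pi * sin x powr (-2*a))"
proof -
  define q where "q = bdry_quantity s v"
  define w where "w x = sin x powr (-a) * v x" for x
  define w' where "w' x = q x * sin x powr (-2*a)" for x
  have "\<forall>\<^sub>F x in at_right 0. dist (q x) 0 < 1" using bc0 unfolding q_def tendsto_iff by simp
  then obtain b0 where b0: "b0 > 0" "\<And>y. y > 0 \<Longrightarrow> y < b0 \<Longrightarrow> \<bar>q y\<bar> < 1"
    unfolding eventually_at_right_field by auto
  have "\<forall>\<^sub>F x in at_left pi. dist (q x) 0 < 1" using bcpi unfolding q_def tendsto_iff by simp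
  then obtain b1 where b1: "b1 < pi" "\<And>y. y > b1 \<Longrightarrow> y < pi \<Longrightarrow> \<bar>q y\<bar> < 1"
    unfolding eventually_at_left_field by auto
  define b where "b = min (b0/2) (min ((pi - b1)/2) (pi/2))"
  have "b \<le> b0/2" unfolding b_def by (rule min.cobounded1)
  have "b \<le> (pi - b1)/2" unfolding b_def by (intro min.coboundedI2 min.cobounded1)
  have "b \<le> pi/2" unfolding b_def by (intro min.coboundedI2 min.cobounded2)
  have "0 < b" using b0 b1 pi_gt_zero unfolding b_def by simp
  note this \<open>b \<le> b0/2\<close> \<open>b \<le> (pi - b1)/2\<close> \<open>b \<le> pi/2\<close>
  then have b: "0 < b" "b \<le> pi/2" "b < b0" "b1 < pi - b" using b0 b1 by auto
  have wd: "(w has_real_derivative w' x) (at x)" if "x \<in> {0<..<pi}" for x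
    unfolding w_def[abs_def] w'_def q_def by (rule dw[OF that])
  have wb: "\<bar>w' x\<bar> \<le> sin x powr (-2*a)" if "\<bar>q x\<bar> < 1" for x
  proof -
    have "\<bar>w' x\<bar> = \<bar>q x\<bar> * sin x powr (-2*a)" by (simp add: w'_def abs_mult)
    also have "\<dots> \<le> 1 * sin x powr (-2*a)" using that by (intro mult_right_mono) auto
    finally show ?thesis by simp
  qed
  have L: "\<bar>w x\<bar> \<le> \<bar>w b\<bar> + pi * (sin x powr (-2*a) + 1)" if "x \<in> {0<..b}" for x
  proof (rule mvt_bound[OF b(1,2) _ _ that])
    fix y assume y: "y \<in> {0<..b}"
    then show "(w has_real_derivative w' y) (at y)" using b by (intro wd) auto
    show "\<bar>w' y\<bar> \<le> sin y powr (-2*a)" using y b b0 by (intro wb b0(2)) auto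
  qed
  have R: "\<bar>w x\<bar> \<le> \<bar>w (pi - b)\<bar> + pi * (sin x powr (-2*a) + 1)" if "x \<in> {pi-b..<pi}" for x
  proof (rule mvt_bound_pi[OF b(1,2) _ _ that])
    fix y assume y: "y \<in> {pi-b..<pi}"
    then show "(w has_real_derivative w' y) (at y)" using b by (intro wd) auto
    show "\<bar>w' y\<bar> \<le> sin y powr (-2*a)" using y b by (intro wb b1(2)) auto
  qed
  define C0 where "C0 = \<bar>w b\<bar> + \<bar>w (pi - b)\<bar> + pi"
  have "\<forall>x \<in> {0<..b} \<union> {pi-b..<pi}. \<bar>w x\<bar> \<le> C0 + pi * sin x powr (-2*a)"
  proof
    fix x assume "x \<in> {0<..b} \<union> {pi-b..<pi}"
    then show "\<bar>w x\<bar> \<le> C0 + pi * sin x powr (-2*a)"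
    proof
      assume "x \<in> {0<..b}"
      from L[OF this] have "\<bar>w x\<bar> \<le> \<bar>w b\<bar> + pi * sin x powr (-2*a) + pi" by (simp add: distrib_left)
      moreover have "0 \<le> \<bar>w (pi - b)\<bar>" by simp
      ultimately show ?thesis unfolding C0_def by linarith
    next
      assume "x \<in> {pi-b..<pi}"
      from R[OF this] have "\<bar>w x\<bar> \<le> \<bar>w (pi - b)\<bar> + pi * sin x powr (-2*a) + pi" by (simp add: distrib_left)
      moreover have "0 \<le> \<bar>w b\<bar>" by simp
      ultimately show ?thesis unfolding C0_def by linarith
    qed
  qed
  moreover have "0 \<le> C0" unfolding C0_def by (simp add: add_nonneg_nonneg)
  ultimately show ?thesis using b unfolding w_def by blast
qed

lemma pw:
  assumes x: "x \<in> {0<..<pi}" and wx: "\<bar>sin x powr (-a) * v x\<bar> \<le> C0 + pi * sin x powr (-2*a)" and C0: "0 \<le> C0"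
  shows "\<bar>sin x powr a * sin x * v x\<bar> \<le> C0 * sin x powr (2*a+1) + pi * sin x"
    and "\<bar>v x * sin x powr a * (sin x)^2\<bar> \<le> C0 + pi"
proof -
  define S where "S = sin x"
  have S: "0 < S" "S \<le> 1" using sin_pos_oi[OF x] by (auto simp: S_def)
  define W where "W = S powr (-a) * v x"
  have vW: "v x = S powr a * W" unfolding W_def using S by (simp add: powr_minus field_simps)
  have W: "\<bar>W\<bar> \<le> C0 + pi * S powr (-2*a)" using wx by (simp add: W_def S_def)
  have p1: "S powr a * S * S powr a = S powr (2*a+1)"
  proof -
    have e: "2*a+1 = (a + a) + 1" by simp
    have "S powr ((a + a) + 1) = S powr a * S powr a * S powr 1" by (simp only: powr_add)
    then show ?thesis unfolding e using S by simp
  qed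
  have p2: "S powr (2*a+1) * S powr (-2*a) = S" using S by (simp add: powr_add[symmetric])
  have "\<bar>S powr a * S * v x\<bar> = S powr (2*a+1) * \<bar>W\<bar>"
    unfolding vW using S p1 by (simp add: abs_mult mult.assoc[symmetric])
  also have "\<dots> \<le> S powr (2*a+1) * (C0 + pi * S powr (-2*a))" by (rule mult_left_mono[OF W]) simp
  also have "\<dots> = C0 * S powr (2*a+1) + pi * S" using p2 by (simp add: algebra_simps)
  finally show "\<bar>sin x powr a * sin x * v x\<bar> \<le> C0 * sin x powr (2*a+1) + pi * sin x" by (simp add: S_def)
  have p3: "S powr a * S^2 * S powr a = S powr (2*a+2)" using S
    by (simp add: powr_add[symmetric] power2_eq_square add.commute powr_add)
  have p4: "S powr (2*a+2) * S powr (-2*a) = S^2" using S by (simp add: powr_add[symmetric] power2_eq_square)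
  have p5: "S powr (2*a+2) \<le> 1"
  proof -
    have "S powr (2*a+2) \<le> 1 powr (2*a+2)" using S a_rng by (intro powr_mono2) auto
    then show ?thesis by simp
  qed
  have p6: "S^2 \<le> 1" using S by (simp add: power_le_one)
  have "\<bar>v x * S powr a * S^2\<bar> = S powr (2*a+2) * \<bar>W\<bar>"
    unfolding vW using S p3 by (simp add: abs_mult mult_ac)
  also have "\<dots> \<le> S powr (2*a+2) * (C0 + pi * S powr (-2*a))" by (rule mult_left_mono[OF W]) simp
  also have "\<dots> = C0 * S powr (2*a+2) + pi * S^2" using p4 by (simp add: algebra_simps)
  also have "\<dots> \<le> C0 * 1 + pi * 1" using p5 p6 C0 by (intro add_mono mult_left_mono) auto
  finally show "\<bar>v x * sin x powr a * (sin x)^2\<bar> \<le> C0 + pi" by (simp add: S_def)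
qed

lemma Tc: "continuous_on {0<..<pi} (\<lambda>x. sin x powr a)"
  by (rule continuous_at_imp_continuous_on) (use Tcont in blast)

lemma hcont: "continuous_on {0<..<pi} (\<lambda>x. v x * sin x powr a * (sin x)^2)"
  by (intro continuous_on_mult vcont Tc continuous_intros)

lemma E1_lim: assumes F: "F = at_right 0 \<or> F = at_left pi"
  shows "((\<lambda>x. sin x powr a * sin x * v x) \<longlongrightarrow> 0) F"
proof -
  obtain b C0 where b: "0 < b" "b \<le> pi/2" "0 \<le> C0"
    "\<forall>x \<in> {0<..b} \<union> {pi-b..<pi}. \<bar>sin x powr (-a) * v x\<bar> \<le> C0 + pi * sin x powr (-2*a)"
    using ends_bound by blast
  have ev: "\<forall>\<^sub>F x in F. x \<in> {0<..b} \<union> {pi-b..<pi}"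
    using F
  proof
    assume "F = at_right 0"
    then show ?thesis using eventually_at_right_real[OF b(1)] by (auto elim!: eventually_mono)
  next
    assume "F = at_left pi"
    moreover have "pi - b < pi" using b by simp
    ultimately show ?thesis using eventually_at_left_real[of "pi - b" pi] by (auto elim!: eventually_mono)
  qed
  have sub: "{0<..b} \<union> {pi-b..<pi} \<subseteq> {0<..<pi}" using b by auto
  show ?thesis
  proof (rule Lim_null_comparison)
    show "\<forall>\<^sub>F x in F. norm (sin x powr a * sin x * v x) \<le> C0 * sin x powr (2*a+1) + pi * sin x"
      using ev by eventually_elim (use pw(1) b sub in auto)
    have "2*a+1 > 0" using a_rng by simp
    have "((\<lambda>x. C0 * sin x powr (2*a+1) + pi * sin x) \<longlongrightarrow> C0 * 0 + pi * 0) F"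
      by (intro tendsto_intros sinpow_lim[OF \<open>2*a+1 > 0\<close> F]) (use F sin_to0_right sin_to0_left in auto)
    then show "((\<lambda>x. C0 * sin x powr (2*a+1) + pi * sin x) \<longlongrightarrow> 0) F" by simp
  qed
qed

lemma h_bound: "\<exists>M. \<forall>x\<in>{0<..<pi}. \<bar>v x * sin x powr a * (sin x)^2\<bar> \<le> M"
proof -
  obtain b C0 where b: "0 < b" "b \<le> pi/2" "0 \<le> C0"
    "\<forall>x \<in> {0<..b} \<union> {pi-b..<pi}. \<bar>sin x powr (-a) * v x\<bar> \<le> C0 + pi * sin x powr (-2*a)"
    using ends_bound by blast
  have "continuous_on {b..pi-b} (\<lambda>x. v x * sin x powr a * (sin x)^2)"
    by (rule continuous_on_subset[OF hcont]) (use b in auto)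
  then have "bounded ((\<lambda>x. v x * sin x powr a * (sin x)^2) ` {b..pi-b})"
    by (intro compact_imp_bounded compact_continuous_image compact_Icc)
  then obtain Mm where Mm: "\<forall>x\<in>{b..pi-b}. \<bar>v x * sin x powr a * (sin x)^2\<bar> \<le> Mm"
    unfolding bounded_real by auto
  have "\<bar>v x * sin x powr a * (sin x)^2\<bar> \<le> max Mm (C0 + pi)" if x: "x \<in> {0<..<pi}" for x
  proof (cases "x \<in> {b..pi-b}")
    case True then show ?thesis using Mm by fastforce
  next
    case False
    then have "x \<in> {0<..b} \<union> {pi-b..<pi}" using x by auto
    then show ?thesis using pw(2)[OF x _ b(3)] b(4) by fastforce
  qed
  then show ?thesis by blast
qed

lemma dB: assumes x: "x \<in> {0<..<pi}"
  shows "((\<lambda>x. deriv v x * V a k x - v x * V1 a k x) has_real_derivative (lam - lamk a k) * (v x * V a k x)) (at x)"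
proof -
  have sx: "sin x > 0" using sin_pos_oi[OF x] .
  have V2e: "V2 a k x = lamk a k * V a k x - a * (1 - a) * (1 / (sin x)^2) * V a k x + a^2 * V a k x"
    using V_ode[OF sx, of a k] by linarith
  have d: "((\<lambda>x. deriv v x * V a k x - v x * V1 a k x) has_real_derivative
     (deriv (deriv v) x * V a k x + V1 a k x * deriv v x) - (deriv v x * V1 a k x + V2 a k x * v x)) (at x)"
    using DERIV_diff[OF DERIV_mult[OF Ddv[OF x] dV[OF sx]] DERIV_mult[OF Dv[OF x] dV1[OF sx]]]
    by (rule DERIV_cong) (simp add: algebra_simps)
  have "(deriv (deriv v) x * V a k x + V1 a k x * deriv v x) - (deriv v x * V1 a k x + V2 a k x * v x)
     = (lam - lamk a k) * (v x * V a k x)"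
    unfolding V2e ode'[OF x] by (simp add: algebra_simps)
  then show ?thesis using d by simp
qed

lemma Bform: assumes x: "x \<in> {0<..<pi}"
  shows "deriv v x * V a k x - v x * V1 a k x =
     poly (Pk a k) (cos x) * bdry_quantity s v x + (sin x powr a * sin x * v x) * poly (pderiv (Pk a k)) (cos x)"
proof -
  have sx: "sin x \<noteq> 0" using sin_pos_oi[OF x] by simp
  show ?thesis unfolding qf[OF x] V_def V1_def using sx by (simp add: field_simps)
qed

lemma B_lim: assumes F: "F = at_right 0 \<or> F = at_left pi"
  shows "((\<lambda>x. deriv v x * V a k x - v x * V1 a k x) \<longlongrightarrow> 0) F"
proof -
  obtain L where L: "((\<lambda>x. poly (Pk a k) (cos x)) \<longlongrightarrow> L) F" using cospoly_lim[OF F] by blast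
  obtain L' where L': "((\<lambda>x. poly (pderiv (Pk a k)) (cos x)) \<longlongrightarrow> L') F" using cospoly_lim[OF F] by blast
  have q: "(bdry_quantity s v \<longlongrightarrow> 0) F" using F bc0 bcpi by auto
  have "((\<lambda>x. poly (Pk a k) (cos x) * bdry_quantity s v x + (sin x powr a * sin x * v x) * poly (pderiv (Pk a k)) (cos x))
     \<longlongrightarrow> L * 0 + 0 * L') F"
    by (intro tendsto_intros L L' q E1_lim[OF F])
  then have "((\<lambda>x. poly (Pk a k) (cos x) * bdry_quantity s v x + (sin x powr a * sin x * v x) * poly (pderiv (Pk a k)) (cos x))
     \<longlongrightarrow> 0) F" by simp
  moreover have "\<forall>\<^sub>F x in F. x \<in> {0<..<pi}" using F ev_right ev_left by auto
  ultimately show ?thesis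
    by (rule Lim_transform_eventually[OF _ eventually_mono]) (simp add: Bform)
qed

lemma Jk_lim: assumes nk: "lam \<noteq> lamk a k"
  shows "((\<lambda>e. integral {e..pi-e} (\<lambda>x. v x * sin x powr a * poly (Pk a k) (cos x))) \<longlongrightarrow> 0) (at_right 0)"
proof -
  define B where "B x = deriv v x * V a k x - v x * V1 a k x" for x
  define c where "c = lam - lamk a k"
  have c: "c \<noteq> 0" using nk by (simp add: c_def)
  have int: "integral {e..pi-e} (\<lambda>x. v x * sin x powr a * poly (Pk a k) (cos x)) = (B (pi - e) - B e) / c"
    if e: "e \<in> {0<..<pi/2}" for e
  proof -
    have "((\<lambda>x. c * (v x * V a k x)) has_integral B (pi - e) - B e) {e..pi-e}"
    proof (rule fundamental_theorem_of_calculus)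
      show "e \<le> pi - e" using e by simp
      fix x assume "x \<in> {e..pi-e}"
      then have x: "x \<in> {0<..<pi}" using e by auto
      show "(B has_vector_derivative c * (v x * V a k x)) (at x within {e..pi-e})"
        unfolding has_real_derivative_iff_has_vector_derivative[symmetric] B_def[abs_def] c_def
        by (rule has_field_derivative_at_within[OF dB[OF x]])
    qed
    then have "((\<lambda>x. v x * V a k x) has_integral (B (pi - e) - B e) / c) {e..pi-e}"
      using has_integral_mult_right_iff[OF c] by blast
    then show ?thesis unfolding V_def by (simp add: mult.assoc integral_unique)
  qed
  have flip: "filterlim (\<lambda>e. pi - e) (at_left pi) (at_right (0::real))"
    unfolding filterlim_at
  proof
    show "\<forall>\<^sub>F x in at_right 0. pi - x \<in> {..<pi} \<and> pi - x \<noteq> pi"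
      using eventually_at_right_less[of 0] by (auto elim!: eventually_mono)
    have "((\<lambda>x. pi - x) \<longlongrightarrow> pi - 0) (at_right (0::real))" by (intro tendsto_intros)
    then show "((\<lambda>x. pi - x) \<longlongrightarrow> pi) (at_right 0)" by simp
  qed
  have B1: "((\<lambda>e. B (pi - e)) \<longlongrightarrow> 0) (at_right 0)"
    using filterlim_compose[OF B_lim[of "at_left pi" k] flip] unfolding B_def by simp
  have B2: "(B \<longlongrightarrow> 0) (at_right 0)" using B_lim[of "at_right 0" k] unfolding B_def[abs_def] by simp
  have "((\<lambda>e. (B (pi - e) - B e) / c) \<longlongrightarrow> (0 - 0) / c) (at_right 0)"
    using c by (intro tendsto_intros B1 B2)
  then have "((\<lambda>e. (B (pi - e) - B e) / c) \<longlongrightarrow> 0) (at_right 0)" by simp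
  moreover have "\<forall>\<^sub>F e in at_right 0. e \<in> {0<..<pi/2}" by (rule eventually_at_right_real) simp
  ultimately show ?thesis
    by (rule Lim_transform_eventually[OF _ eventually_mono]) (simp add: int)
qed

lemma Uint: assumes g: "continuous_on UNIV g" and e: "0 < e"
  shows "(\<lambda>x. v x * sin x powr a * g (cos x)) integrable_on {e..pi-e}"
proof (rule integrable_continuous_interval)
  have sub: "{e..pi-e} \<subseteq> {0<..<pi}" using e by auto
  have "continuous_on {e..pi-e} (\<lambda>x. v x * sin x powr a)"
    by (rule continuous_on_subset[OF continuous_on_mult[OF vcont Tc] sub])
  moreover have "continuous_on {e..pi-e} (\<lambda>x. g (cos x))"
    by (rule continuous_on_compose2[OF g]) (auto intro: continuous_intros)
  ultimately show "continuous_on {e..pi-e} (\<lambda>x. v x * sin x powr a * g (cos x))"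
    by (rule continuous_on_mult)
qed

lemma Ulin: assumes g1: "continuous_on UNIV g1" and g2: "continuous_on UNIV g2" and e: "0 < e"
  shows "integral {e..pi-e} (\<lambda>x. v x * sin x powr a * (d * g1 (cos x) + g2 (cos x)))
       = d * integral {e..pi-e} (\<lambda>x. v x * sin x powr a * g1 (cos x)) + integral {e..pi-e} (\<lambda>x. v x * sin x powr a * g2 (cos x))"
proof -
  have "integral {e..pi-e} (\<lambda>x. v x * sin x powr a * (d * g1 (cos x) + g2 (cos x)))
     = integral {e..pi-e} (\<lambda>x. d * (v x * sin x powr a * g1 (cos x)) + v x * sin x powr a * g2 (cos x))"
    by (simp add: algebra_simps)
  also have "\<dots> = integral {e..pi-e} (\<lambda>x. d * (v x * sin x powr a * g1 (cos x))) + integral {e..pi-e} (\<lambda>x. v x * sin x powr a * g2 (cos x))"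
  proof (rule integral_add[OF _ Uint[OF g2 e]])
    show "(\<lambda>x. d * (v x * sin x powr a * g1 (cos x))) integrable_on {e..pi-e}"
      using integrable_cmul[OF Uint[OF g1 e], of d] by simp
  qed
  finally show ?thesis by simp
qed

lemma span: assumes nk: "\<forall>k. lam \<noteq> lamk a k"
  shows "((\<lambda>e. integral {e..pi-e} (\<lambda>x. v x * sin x powr a * (\<Sum>i\<le>n. c i * (cos x)^i))) \<longlongrightarrow> 0) (at_right 0)"
proof (induction n arbitrary: c)
  case 0
  have fe: "(\<lambda>x. v x * sin x powr a * (\<Sum>i\<le>0. c i * (cos x)^i)) = (\<lambda>x. c 0 * (v x * sin x powr a * poly (Pk a 0) (cos x)))"
    by (simp add: poly_Pk fun_eq_iff)
  have e: "(\<lambda>e. integral {e..pi-e} (\<lambda>x. v x * sin x powr a * (\<Sum>i\<le>0. c i * (cos x)^i)))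
     = (\<lambda>e. c 0 * integral {e..pi-e} (\<lambda>x. v x * sin x powr a * poly (Pk a 0) (cos x)))"
    by (simp only: fe integral_mult_right)
  show ?case unfolding e using tendsto_mult_right_zero[OF Jk_lim[of 0]] nk by simp
next
  case (Suc n)
  define d where "d = c (Suc n) / pc a (Suc n) (Suc n)"
  define c' where "c' i = c i - d * pc a (Suc n) i" for i
  have pn: "pc a (Suc n) (Suc n) \<noteq> 0" using pc_top a_rng by blast
  have split: "(\<Sum>i\<le>Suc n. c i * y^i) = d * poly (Pk a (Suc n)) y + (\<Sum>i\<le>n. c' i * y^i)" for y :: real
  proof -
    define A where "A = (\<Sum>i\<le>n. pc a (Suc n) i * y^i)"
    define C where "C = (\<Sum>i\<le>n. c i * y^i)"
    have s1: "(\<Sum>i\<le>n. c' i * y^i) = C - d * A"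
      unfolding c'_def C_def A_def by (simp add: sum_subtractf sum_distrib_left left_diff_distrib mult.assoc)
    have s2: "poly (Pk a (Suc n)) y = A + pc a (Suc n) (Suc n) * y^Suc n"
      unfolding poly_Pk A_def by (rule sum.atMost_Suc)
    have s3: "d * pc a (Suc n) (Suc n) = c (Suc n)" using pn d_def by simp
    have s4: "(\<Sum>i\<le>Suc n. c i * y^i) = C + c (Suc n) * y^Suc n"
      unfolding C_def by (rule sum.atMost_Suc)
    have "d * poly (Pk a (Suc n)) y + (C - d * A) = (d * pc a (Suc n) (Suc n)) * y^Suc n + C"
      unfolding s2 by (simp add: algebra_simps)
    then show ?thesis unfolding s1 s4 s3 by simp
  qed
  have cont1: "continuous_on UNIV (\<lambda>y. poly (Pk a (Suc n)) y)" by (intro continuous_intros)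
  have cont2: "continuous_on UNIV (\<lambda>y::real. \<Sum>i\<le>n. c' i * y^i)" by (intro continuous_intros)
  have e: "integral {e..pi-e} (\<lambda>x. v x * sin x powr a * (\<Sum>i\<le>Suc n. c i * (cos x)^i))
     = d * integral {e..pi-e} (\<lambda>x. v x * sin x powr a * poly (Pk a (Suc n)) (cos x))
       + integral {e..pi-e} (\<lambda>x. v x * sin x powr a * (\<Sum>i\<le>n. c' i * (cos x)^i))" if "0 < e" for e
    unfolding split using Ulin[OF cont1 cont2 that, of d] by simp
  have "((\<lambda>e. d * integral {e..pi-e} (\<lambda>x. v x * sin x powr a * poly (Pk a (Suc n)) (cos x))
       + integral {e..pi-e} (\<lambda>x. v x * sin x powr a * (\<Sum>i\<le>n. c' i * (cos x)^i))) \<longlongrightarrow> d * 0 + 0) (at_right 0)"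
    by (intro tendsto_intros Jk_lim Suc.IH) (use nk in auto)
  then have "((\<lambda>e. d * integral {e..pi-e} (\<lambda>x. v x * sin x powr a * poly (Pk a (Suc n)) (cos x))
       + integral {e..pi-e} (\<lambda>x. v x * sin x powr a * (\<Sum>i\<le>n. c' i * (cos x)^i))) \<longlongrightarrow> 0) (at_right 0)" by simp
  moreover have "\<forall>\<^sub>F e in at_right (0::real). 0 < e" by (rule eventually_at_right_less)
  ultimately show ?case
    by (rule Lim_transform_eventually[OF _ eventually_mono]) (simp only: e)
qed

lemma final: assumes nz: "\<exists>\<phi>\<in>{0<..<pi}. v \<phi> \<noteq> 0" shows "\<exists>k. lam = lamk a k"
proof (rule ccontr)
  assume "\<not> ?thesis" then have nk: "\<forall>k. lam \<noteq> lamk a k" by auto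
  define h where "h x = v x * sin x powr a * (sin x)^2" for x
  obtain M where M: "\<forall>x\<in>{0<..<pi}. \<bar>h x\<bar> \<le> M" using h_bound unfolding h_def by blast
  obtain x0 where x0: "x0 \<in> {0<..<pi}" "v x0 \<noteq> 0" using nz by blast
  have sx: "sin x0 > 0" using sin_pos_oi[OF x0(1)] .
  have hx0: "h x0 \<noteq> 0" using sx x0(2) by (simp add: h_def)
  have idp: "real_polynomial_function (\<lambda>y::real. y)"
    using polynomial_function_id real_polynomial_function_eq by blast
  show False
  proof (rule density_contra[of h M x0])
    show "continuous_on {0<..<pi} h" using hcont unfolding h_def[abs_def] .
    show "\<forall>x\<in>{0<..<pi}. \<bar>h x\<bar> \<le> M" by (rule M)
    show "x0 \<in> {0<..<pi}" "h x0 \<noteq> 0" using x0 hx0 by auto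
    fix g :: "real \<Rightarrow> real" assume g: "real_polynomial_function g"
    define g' where "g' y = (1 - y^2) * g y" for y
    have "real_polynomial_function g'" unfolding g'_def[abs_def]
      by (intro real_polynomial_function.intros(4) real_polynomial_function_diff real_polynomial_function.intros(2)
            real_polynomial_function_power g idp)
    then obtain c n where cn: "g' = (\<lambda>x. \<Sum>i\<le>n. c i * x^i)" using real_polynomial_function_iff_sum by blast
    have "(\<lambda>x. h x * g (cos x)) = (\<lambda>x. v x * sin x powr a * g' (cos x))"
      by (simp add: fun_eq_iff h_def g'_def sin_squared_eq mult_ac)
    also have "\<dots> = (\<lambda>x. v x * sin x powr a * (\<Sum>i\<le>n. c i * (cos x)^i))" unfolding cn ..
    finally show "((\<lambda>e. integral {e..pi-e} (\<lambda>x. h x * g (cos x))) \<longlongrightarrow> 0) (at_right 0)"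
      using span[OF nk, where n=n and c=c] by simp
  qed
qed

end

lemma bwd: assumes s: "0 < s" "s < 1" and ev: "is_eigenvalue s lam"
  shows "\<exists>k. lam = lamk ((1 - 2 * s) / 2) k"
proof -
  from ev obtain v where
    "\<forall>\<phi>\<in>{0<..<pi}. v differentiable (at \<phi>) \<and> deriv v differentiable (at \<phi>)"
    "\<forall>\<phi>\<in>{0<..<pi}. angular_op s v \<phi> = lam * v \<phi>"
    "(bdry_quantity s v \<longlongrightarrow> 0) (at_right 0)" "(bdry_quantity s v \<longlongrightarrow> 0) (at_left pi)"
    "\<exists>\<phi>\<in>{0<..<pi}. v \<phi> \<noteq> 0"
    unfolding is_eigenvalue_def by blast
  from final[OF s refl this] show ?thesis .
qed

lemma lk: "lamk ((1 - 2 * s) / 2) k = - (1 - 2 * s)\<^sup>2 / 4 - (real (k::nat) - s + 1/2)\<^sup>2"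
  by (simp add: lamk_def power2_eq_square field_simps)

theorem mainTheorem8:
  fixes s :: real
  assumes "0 < s" and "s < 1"
  shows "{lam. is_eigenvalue s lam} =
         {- (1 - 2 * s)\<^sup>2 / 4 - (real (k::nat) - s + 1/2)\<^sup>2 | k. True}"
proof
  show "{lam. is_eigenvalue s lam} \<subseteq> {- (1 - 2 * s)\<^sup>2 / 4 - (real (k::nat) - s + 1/2)\<^sup>2 | k. True}"
    using bwd[OF assms] lk by auto
  show "{- (1 - 2 * s)\<^sup>2 / 4 - (real (k::nat) - s + 1/2)\<^sup>2 | k. True} \<subseteq> {lam. is_eigenvalue s lam}"
    using fwd[OF assms refl] lk by auto
qed

end
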